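(* Let $P=[p_{f,k}]$, $f\in[0,F)$, $k\in[0,K)$, be a $(K,F,S)$ MRA. Consider an MADC model with $K$ reducer nodes indexed by $[0,K)$ and $F$ batches of files $B_0,\dots,B_{F-1}$, with some number $\Lambda$ of mapper nodes and computation load $r$, in which the batches are assigned to the mapper nodes and the mapper nodes are connected to the reducer nodes in such a way that every reducer node $k\in[0,K)$ has access to all batches in the set $$R_k=\{B_f:\ p_{f,k}=*,\ f\in[0,F)\}.$$ Then the communication load $$L(r)=\frac{S}{KF}+\sum_{g=2}^{K}\frac{S_g}{KF(g-1)}$$ is achievable for this MADC model, where $S_g$ denotes the number of integers in $[0,S)$ that appear exactly $g$ times in $P$.
   Context: Notation: $[0,n)=\{0,1,\dots,n-1\}$, $[n]=\{1,\dots,n\}$. MADC (multi-access distributed computing) model: There are $\Lambda$ mapper nodes indexed by $[0,\Lambda)$ and $K$ reducer nodes indexed by $[0,K)$. There are $N$ input files $w_0,\dots,w_{N-1}\in\mathbb{F}_{2^d}$ and $Q$ output functions $\phi_q:\mathbb{F}_{2^d}^N\to\mathbb{F}_{2^b}$, $q\in[0,Q)$, of the form $\phi_q(w_0,\dots,w_{N-1})=h_q(v_{q,0},\dots,v_{q,N-1})$, where $v_{q,n}=g_{q,n}(w_n)\in\mathbb{F}_{2^t}$ is called an intermediate value (IV). Each reducer node $k$ is assigned a set $\mathcal W_k\subseteq[0,Q)$ of $Q/K$ output functions, these sets being pairwise disjoint. The files are partitioned into $F$ disjoint batches of $N/F$ files each. Map phase: each mapper node $\lambda$ stores a set $M_\lambda$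 of batches and computes all IVs $v_{q,n}$, $q\in[0,Q)$, for all files $w_n$ in its stored batches. Each reducer node is connected to a set of mapper nodes and has access to every batch stored at any mapper node it is connected to, together with all IVs computed from those batches. Shuffle phase: each reducer node $k$ broadcasts to all other reducer nodes, error-free, a message $\mathbf X_k$ of $l_k$ bits that is a function of the IVs it has access to. Reduce phase: each reducer node $k$ must recover all IVs $v_{q,n}$ with $q\in\mathcal W_k$, $n\in[0,N)$, from the received messages and the IVs it has access to. The computation load is $r=\sum_{\lambda=0}^{\Lambda-1}|M_\lambda|/F$ and the communication load is $L=\sum_{k=0}^{K-1}l_k/(QNt)$. A communication load $L$ is achievable for a given model (given batches, mapper storage and mapper–reducer connections) if there exists a shuffle/reduce scheme satisfying all decoding requirements that attains $L$ (for a suitable choice of the number of files per batch, the number of functions per reducer, and the IV length $t$). Map-Reduce Array (MRA): For positive integers $K,F,S$, an $F\times K$ array $P=[p_{f,k}]$, $f\in[0,F)$, $k\in[0,K)$, whose entries are either the symbol $*$ or integers from $[0,S)$, with every integer of $[0,S)$ occurring in $P$, is a $(K,F,S)$ MRA if: (C1) each integer occurs more than once in $P$; (C2) whenever two distinct entries satisfy $p_{f_1,k_1}=p_{f_2,k_2}=s$ with $s$ an integer, then $f_1\neq f_2$, $k_1\neq k_2$, and $p_{f_1,k_2}=p_{f_2,k_1}=*$. It is a $g$-regular MRA (for a constant $g\ge 2$) if it satisfies (C2) and every integer occurs exactly $g$ times. *)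

theory Defs
  imports "HOL-Analysis.Analysis"
begin

text \<open>An F x K array with entries in nat option; None encodes the symbol *,
  Some s encodes the integer s. Rows f in [0,F), columns k in [0,K).\<close>

definition occ :: "nat \<Rightarrow> nat \<Rightarrow> (nat \<Rightarrow> nat \<Rightarrow> nat option) \<Rightarrow> nat \<Rightarrow> (nat \<times> nat) set" where
  "occ K F P s = {(f, k). f < F \<and> k < K \<and> P f k = Some s}"

definition is_MRA :: "nat \<Rightarrow> nat \<Rightarrow> nat \<Rightarrow> (nat \<Rightarrow> nat \<Rightarrow> nat option) \<Rightarrow> bool" where
  "is_MRA K F S P \<longleftrightarrow>
     0 < K \<and> 0 < F \<and> 0 < S \<and>
     (\<forall>f<F. \<forall>k<K. \<forall>s. P f k = Some s \<longrightarrow> s < S) \<and>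
     (\<forall>s<S. occ K F P s \<noteq> {}) \<and>
     (\<forall>s<S. card (occ K F P s) > 1) \<and>
     (\<forall>f1<F. \<forall>k1<K. \<forall>f2<F. \<forall>k2<K. \<forall>s.
        (f1, k1) \<noteq> (f2, k2) \<and> P f1 k1 = Some s \<and> P f2 k2 = Some s \<longrightarrow>
        f1 \<noteq> f2 \<and> k1 \<noteq> k2 \<and> P f1 k2 = None \<and> P f2 k1 = None)"

definition S_count :: "nat \<Rightarrow> nat \<Rightarrow> nat \<Rightarrow> (nat \<Rightarrow> nat \<Rightarrow> nat option) \<Rightarrow> nat \<Rightarrow> nat" where
  "S_count K F S P g = card {s. s < S \<and> card (occ K F P s) = g}"

text \<open>MADC model data: Lam mapper nodes, M lam = set of batch indices stored at
  mapper lam (subset of [0,F)), Conn k = set of mappers connected to reducer k.\<close>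
definition madc_model :: "nat \<Rightarrow> nat \<Rightarrow> nat \<Rightarrow> (nat \<Rightarrow> nat set) \<Rightarrow> (nat \<Rightarrow> nat set) \<Rightarrow> bool" where
  "madc_model K F Lam M Conn \<longleftrightarrow>
     (\<forall>lam<Lam. M lam \<subseteq> {..<F}) \<and> (\<forall>k<K. Conn k \<subseteq> {..<Lam})"

definition comp_load :: "nat \<Rightarrow> nat \<Rightarrow> (nat \<Rightarrow> nat set) \<Rightarrow> real" where
  "comp_load F Lam M = (\<Sum>lam<Lam. real (card (M lam))) / real F"

definition access :: "(nat \<Rightarrow> nat set) \<Rightarrow> (nat \<Rightarrow> nat set) \<Rightarrow> nat \<Rightarrow> nat set" where
  "access M Conn k = (\<Union>lam\<in>Conn k. M lam)"

text \<open>With nb files per batch (N = F*nb files), file n belongs to batch n div nb.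
  IVs are modelled as a function v q n giving a bit string of length t.\<close>
definition mask :: "nat \<Rightarrow> nat \<Rightarrow> nat \<Rightarrow> nat set \<Rightarrow> (nat \<Rightarrow> nat \<Rightarrow> bool list) \<Rightarrow> nat \<Rightarrow> nat \<Rightarrow> bool list" where
  "mask Q N nb A v = (\<lambda>q n. if q < Q \<and> n < N \<and> n div nb \<in> A then v q n else [])"

definition madc_achievable ::
  "nat \<Rightarrow> nat \<Rightarrow> nat \<Rightarrow> (nat \<Rightarrow> nat set) \<Rightarrow> (nat \<Rightarrow> nat set) \<Rightarrow> real \<Rightarrow> bool" where
  "madc_achievable K F Lam M Conn L \<longleftrightarrow>
    (\<exists>nb qk t. 0 < nb \<and> 0 < qk \<and> 0 < t \<and>
      (let N = F * nb; Q = K * qk in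
       \<forall>W :: nat \<Rightarrow> nat set.
         (\<forall>k<K. W k \<subseteq> {..<Q} \<and> card (W k) = qk) \<and>
         (\<forall>k1<K. \<forall>k2<K. k1 \<noteq> k2 \<longrightarrow> W k1 \<inter> W k2 = {}) \<longrightarrow>
         (\<exists>(l :: nat \<Rightarrow> nat)
            (enc :: nat \<Rightarrow> (nat \<Rightarrow> nat \<Rightarrow> bool list) \<Rightarrow> bool list)
            (dec :: nat \<Rightarrow> (nat \<Rightarrow> bool list) \<Rightarrow> (nat \<Rightarrow> nat \<Rightarrow> bool list) \<Rightarrow> nat \<Rightarrow> nat \<Rightarrow> bool list).
           (\<forall>v :: nat \<Rightarrow> nat \<Rightarrow> bool list. (\<forall>q<Q. \<forall>n<N. length (v q n) = t) \<longrightarrow>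
              (\<forall>k<K. length (enc k (mask Q N nb (access M Conn k) v)) = l k) \<and>
              (\<forall>k<K. \<forall>q\<in>W k. \<forall>n<N.
                 dec k (\<lambda>j. if j < K \<and> j \<noteq> k then enc j (mask Q N nb (access M Conn j) v) else [])
                       (mask Q N nb (access M Conn k) v) q n = v q n)) \<and>
           L = real (\<Sum>k<K. l k) / (real Q * real N * real t))))"

end

theory Submission
  imports Defs
begin
fun bits_to_nat :: "bool list \<Rightarrow> nat" where
  "bits_to_nat [] = 0"
| "bits_to_nat (b#bs) = of_bool b + 2 * bits_to_nat bs"

fun nat_to_bits :: "nat \<Rightarrow> nat \<Rightarrow> bool list" where
  "nat_to_bits 0 x = []"
| "nat_to_bits (Suc c) x = odd x # nat_to_bits c (x div 2)"

lemma len_ntb[simp]: "length (nat_to_bits c x) = c"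
  by (induction c arbitrary: x) auto

lemma btn_lt: "bits_to_nat xs < 2 ^ length xs"
  by (induction xs) auto

lemma ntb_btn: "nat_to_bits (length xs) (bits_to_nat xs) = xs"
  by (induction xs) auto

lemma btn_ntb: "bits_to_nat (nat_to_bits c x) = x mod 2^c"
proof (induction c arbitrary: x)
  case 0 then show ?case by simp
next
  case (Suc c)
  have "x mod (2 * 2^c) = 2 * (x div 2 mod 2^c) + x mod 2" by (rule mod_mult2_eq)
  then show ?case using Suc by (simp add: odd_iff_mod_2_eq_one)
qed

definition idxof :: "nat list \<Rightarrow> nat \<Rightarrow> nat" where
  "idxof xs x = length (takeWhile (\<lambda>y. y \<noteq> x) xs)"

lemma idxof_nth: "distinct xs \<Longrightarrow> p < length xs \<Longrightarrow> idxof xs (xs!p) = p"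
proof (induction xs arbitrary: p)
  case Nil then show ?case by simp
next
  case (Cons a xs)
  show ?case
  proof (cases p)
    case 0 then show ?thesis by (simp add: idxof_def)
  next
    case (Suc p')
    then have "xs ! p' \<noteq> a" using Cons.prems by (auto simp: nth_mem)
    then show ?thesis using Cons Suc by (simp add: idxof_def)
  qed
qed

lemma idxof_lt: "x \<in> set xs \<Longrightarrow> idxof xs x < length xs"
  unfolding idxof_def by (induction xs) auto

lemma concat_take_drop:
  "concat (map (\<lambda>p. take c (drop (p*c) x)) [0..<n]) = take (n*c) x"
proof (induction n)
  case 0 then show ?case by simp
next
  case (Suc n)
  have "Suc n * c = n*c + c" by simp
  then show ?case using Suc by (simp add: take_add del: mult_Suc)
qed

lemma concat_extract:
  assumes "s < S"
  shows "take (length (f s)) (drop (\<Sum>s'<s. length (f s')) (concat (map f [0..<S]))) = f s"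
proof -
  have "[0..<S] = [0..<s] @ [s..<S]" using assms
    by (metis less_imp_le_nat upt_add_eq_append le_Suc_ex zero_le)
  also have "[s..<S] = s # [Suc s..<S]" using assms by (rule upt_conv_Cons)
  finally have "[0..<S] = [0..<s] @ s # [Suc s..<S]" .
  moreover have "length (concat (map f [0..<s])) = (\<Sum>s'<s. length (f s'))"
    by (simp add: length_concat atLeast0LessThan[symmetric] interv_sum_list_conv_sum_set_nat)
  ultimately show ?thesis by simp
qed
lemma aux_field: "(G::real) > 1 \<Longrightarrow> D > 0 \<Longrightarrow> T > 0 \<Longrightarrow> G * (T/(G-1)) / (D*T) = 1/D + 1/(D*(G-1))"
proof -
  assume a: "G > 1" "D > 0" "T > 0"
  then have "G - 1 \<noteq> 0" "D \<noteq> 0" "T \<noteq> 0" by auto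
  then show ?thesis by (simp add: field_simps)
qed

locale constr =
  fixes K F S :: nat and P :: "nat \<Rightarrow> nat \<Rightarrow> nat option" and w :: "nat \<Rightarrow> nat" and t :: nat
  assumes mra: "is_MRA K F S P" and wK: "\<forall>k<K. w k < K"
begin

definition Cs where "Cs s = {k. k < K \<and> (\<exists>f<F. P f k = Some s)}"
definition gs where "gs s = card (occ K F P s)"
definition row where "row s k = (THE f. f < F \<and> P f k = Some s)"
definition cs where "cs s = t div (gs s - 1)"
definition cl where "cl s i = filter (\<lambda>j. j \<noteq> i) (sorted_list_of_set (Cs s))"
definition pos where "pos s i j = idxof (cl s i) j"
definition piece where
  "piece mv s i j = take (cs s) (drop (pos s i j * cs s) (mv (w i) (row s i)))"
definition msgp where
  "msgp mv s j = nat_to_bits (cs s) ((\<Sum>i\<in>Cs s - {j}. bits_to_nat (piece mv s i j)) mod 2^(cs s))"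
definition enc where
  "enc j mv = concat (map (\<lambda>s. if j \<in> Cs s then msgp mv s j else []) [0..<S])"
definition off where "off j s = (\<Sum>s'<s. if j \<in> Cs s' then cs s' else 0)"
definition Dk where
  "Dk m mv s k j = nat_to_bits (cs s)
     (nat ((int (bits_to_nat (take (cs s) (drop (off j s) (m j))))
        - int (\<Sum>i\<in>Cs s - {j,k}. bits_to_nat (piece mv s i j))) mod 2^(cs s)))"
definition dec where
  "dec k m mv q n = (if n < F \<and> P n k \<noteq> None then
      concat (map (\<lambda>j. Dk m mv (the (P n k)) k j) (cl (the (P n k)) k)) else mv q n)"

lemma C2: "f1 < F \<Longrightarrow> k1 < K \<Longrightarrow> f2 < F \<Longrightarrow> k2 < K \<Longrightarrow> (f1, k1) \<noteq> (f2, k2) \<Longrightarrow>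
   P f1 k1 = Some s \<Longrightarrow> P f2 k2 = Some s \<Longrightarrow> f1 \<noteq> f2 \<and> k1 \<noteq> k2 \<and> P f1 k2 = None \<and> P f2 k1 = None"
  using mra unfolding is_MRA_def by blast

lemma row: assumes "i \<in> Cs s" shows "row s i < F" "P (row s i) i = Some s"
proof -
  from assms obtain f where f: "f < F" "P f i = Some s" "i < K" unfolding Cs_def by auto
  have "\<exists>!f. f < F \<and> P f i = Some s"
    using f C2[of _ i _ i s] by blast
  then have "row s i < F \<and> P (row s i) i = Some s" unfolding row_def by (rule theI')
  then show "row s i < F" "P (row s i) i = Some s" by auto
qed

lemma row_eq: "n < F \<Longrightarrow> k < K \<Longrightarrow> P n k = Some s \<Longrightarrow> row s k = n"
proof -
  assume a: "n < F" "k < K" "P n k = Some s"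
  then have ks: "k \<in> Cs s" unfolding Cs_def by auto
  show "row s k = n" using row[OF ks] a C2[of n k "row s k" k s] by auto
qed

lemma Cs_K: "Cs s \<subseteq> {..<K}" unfolding Cs_def by auto
lemma Cs_fin[simp]: "finite (Cs s)" using Cs_K finite_subset by blast

lemma card_Cs: "card (Cs s) = gs s"
proof -
  have "inj_on snd (occ K F P s)"
    unfolding inj_on_def occ_def using C2 by fastforce
  moreover have "snd ` occ K F P s = Cs s"
    unfolding occ_def Cs_def by (auto simp: image_def)
  ultimately show ?thesis unfolding gs_def by (metis card_image)
qed

lemma gs_bounds: "s < S \<Longrightarrow> 2 \<le> gs s \<and> gs s \<le> K"
proof -
  assume "s < S"
  then have "card (occ K F P s) > 1" using mra unfolding is_MRA_def by blast
  moreover have "card (Cs s) \<le> K" using card_mono[OF _ Cs_K] by fastforce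
  ultimately show ?thesis using card_Cs unfolding gs_def by auto
qed

lemma access_other: "i \<in> Cs s \<Longrightarrow> j \<in> Cs s \<Longrightarrow> i \<noteq> j \<Longrightarrow> P (row s i) j = None"
proof -
  assume a: "i \<in> Cs s" "j \<in> Cs s" "i \<noteq> j"
  then have "i < K" "j < K" unfolding Cs_def by auto
  then show ?thesis using C2[of "row s i" i "row s j" j s] row[OF a(1)] row[OF a(2)] a(3) by auto
qed

lemma cl_props: "i \<in> Cs s \<Longrightarrow> distinct (cl s i) \<and> length (cl s i) = gs s - 1 \<and> set (cl s i) = Cs s - {i}"
proof -
  assume a: "i \<in> Cs s"
  have d: "distinct (sorted_list_of_set (Cs s))" by simp
  have st: "set (cl s i) = Cs s - {i}" unfolding cl_def by auto
  moreover have "distinct (cl s i)" unfolding cl_def using d by simp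
  moreover have "length (cl s i) = card (Cs s - {i})"
    using distinct_card[OF \<open>distinct (cl s i)\<close>] st by simp
  ultimately show ?thesis using a card_Cs by simp
qed


end

locale constr1 = constr +
  assumes tdvd: "\<forall>s<S. (card (occ K F P s) - 1) dvd t"
begin

lemma cs_mult: "s < S \<Longrightarrow> (gs s - 1) * cs s = t"
  using tdvd unfolding cs_def gs_def by simp

lemma pos_lt: "i \<in> Cs s \<Longrightarrow> j \<in> Cs s - {i} \<Longrightarrow> pos s i j < gs s - 1"
  unfolding pos_def using cl_props[of i s] idxof_lt[of j "cl s i"] by auto

lemma len_piece:
  assumes lens: "\<forall>q<K. \<forall>n<F. length (v q n) = t"
    and s: "s < S" and i: "i \<in> Cs s" and j: "j \<in> Cs s - {i}"
  shows "length (piece v s i j) = cs s"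
proof -
  have iK: "i < K" using i Cs_K by auto
  have l: "length (v (w i) (row s i)) = (gs s - 1) * cs s"
    using lens wK iK row(1)[OF i] cs_mult[OF s] by auto
  have "pos s i j < gs s - 1" by (rule pos_lt[OF i j])
  then have "pos s i j * cs s + cs s \<le> (gs s - 1) * cs s"
    by (metis add_mult_distrib less_iff_Suc_add mult_Suc mult_le_mono1 add.commute le_add1 Suc_leI)
  then show ?thesis unfolding piece_def using l by simp
qed

lemma piece_mask:
  assumes accs: "\<forall>k<K. {f. f < F \<and> P f k = None} \<subseteq> A k"
    and i: "i \<in> Cs s" and j: "j \<in> Cs s" and ij: "i \<noteq> j"
  shows "piece (mask K F 1 (A j) v) s i j' = piece v s i j'"
proof -
  have jK: "j < K" and iK: "i < K" using i j Cs_K by auto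
  have "row s i \<in> A j" using accs jK row(1)[OF i] access_other[OF i j ij] by auto
  then have "mask K F 1 (A j) v (w i) (row s i) = v (w i) (row s i)"
    using wK iK row(1)[OF i] unfolding mask_def by simp
  then show ?thesis unfolding piece_def by simp
qed

lemma enc_extract: "s < S \<Longrightarrow> j \<in> Cs s \<Longrightarrow> take (cs s) (drop (off j s) (enc j mv)) = msgp mv s j"
proof -
  assume s: "s < S" and j: "j \<in> Cs s"
  define f where "f = (\<lambda>s. if j \<in> Cs s then msgp mv s j else [])"
  have lf: "\<And>s'. length (f s') = (if j \<in> Cs s' then cs s' else 0)"
    unfolding f_def msgp_def by simp
  have "take (length (f s)) (drop (\<Sum>s'<s. length (f s')) (concat (map f [0..<S]))) = f s"
    by (rule concat_extract[OF s])
  then show ?thesis using j unfolding enc_def off_def lf by (simp add: f_def)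
qed

lemma enc_len: "length (enc j mv) = off j S"
  unfolding enc_def off_def msgp_def
  by (simp add: length_concat atLeast0LessThan[symmetric] interv_sum_list_conv_sum_set_nat if_distrib
      cong: if_cong)

lemma Dk_correct:
  assumes lens: "\<forall>q<K. \<forall>n<F. length (v q n) = t"
    and accs: "\<forall>k<K. {f. f < F \<and> P f k = None} \<subseteq> A k"
    and s: "s < S" and k: "k \<in> Cs s" and j: "j \<in> Cs s - {k}"
    and mj: "m j = enc j (mask K F 1 (A j) v)"
  shows "Dk m (mask K F 1 (A k) v) s k j = piece v s k j"
proof -
  let ?c = "cs s"
  have jC: "j \<in> Cs s" and kj: "k \<noteq> j" using j by auto
  define X where "X = bits_to_nat (piece v s k j)"
  define B where "B = (\<Sum>i\<in>Cs s - {j,k}. bits_to_nat (piece v s i j))"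
  have lp: "length (piece v s k j) = ?c" by (rule len_piece[OF lens s k j])
  have Xlt: "X < 2^?c" unfolding X_def using btn_lt[of "piece v s k j"] lp by simp
  have sumsplit: "(\<Sum>i\<in>Cs s - {j}. bits_to_nat (piece (mask K F 1 (A j) v) s i j)) = X + B"
  proof -
    have "(\<Sum>i\<in>Cs s - {j}. bits_to_nat (piece (mask K F 1 (A j) v) s i j))
        = (\<Sum>i\<in>Cs s - {j}. bits_to_nat (piece v s i j))"
      by (intro sum.cong refl arg_cong[where f=bits_to_nat] piece_mask[OF accs _ jC]) auto
    also have "\<dots> = (\<Sum>i\<in>insert k (Cs s - {j,k}). bits_to_nat (piece v s i j))"
    proof -
      have "Cs s - {j} = insert k (Cs s - {j,k})" using k kj by auto
      then show ?thesis by simp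
    qed
    also have "\<dots> = X + B"
      unfolding X_def B_def by (subst sum.insert) auto
    finally show ?thesis .
  qed
  have seg: "bits_to_nat (take ?c (drop (off j s) (m j))) = (X + B) mod 2^?c"
    unfolding mj enc_extract[OF s jC] msgp_def btn_ntb sumsplit by simp
  have Bk: "(\<Sum>i\<in>Cs s - {j,k}. bits_to_nat (piece (mask K F 1 (A k) v) s i j)) = B"
    unfolding B_def by (intro sum.cong refl arg_cong[where f=bits_to_nat] piece_mask[OF accs _ k]) auto
  have "(int ((X + B) mod 2^?c) - int B) mod 2^?c = int X"
  proof -
    have "(int ((X + B) mod 2^?c) - int B) mod 2^?c = (int (X + B) - int B) mod 2^?c"
      by (simp add: mod_diff_left_eq zmod_int)
    also have "\<dots> = int X mod 2^?c" by simp
    also have "\<dots> = int X" using Xlt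
      by (metis of_nat_numeral of_nat_power zmod_int mod_less)
    finally show ?thesis .
  qed
  then have "Dk m (mask K F 1 (A k) v) s k j = nat_to_bits ?c X"
    unfolding Dk_def seg Bk by simp
  also have "\<dots> = piece v s k j" unfolding X_def using ntb_btn[of "piece v s k j"] lp by simp
  finally show ?thesis .
qed


lemma reconstruct:
  assumes lens: "\<forall>q<K. \<forall>n<F. length (v q n) = t" and s: "s < S" and k: "k \<in> Cs s"
  shows "concat (map (\<lambda>j. piece v s k j) (cl s k)) = v (w k) (row s k)"
proof -
  obtain d: "distinct (cl s k)" and lc: "length (cl s k) = gs s - 1"
    using cl_props[OF k] by blast
  let ?x = "v (w k) (row s k)"
  have kK: "k < K" using k Cs_K by auto
  have lx: "length ?x = (gs s - 1) * cs s" using lens wK kK row(1)[OF k] cs_mult[OF s] by auto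
  have "map (\<lambda>j. piece v s k j) (cl s k) = map (\<lambda>j. piece v s k j) (map (nth (cl s k)) [0..<length (cl s k)])"
    by (simp add: map_nth)
  also have "\<dots> = map (\<lambda>p. take (cs s) (drop (p * cs s) ?x)) [0..<gs s - 1]"
    using d lc by (auto simp: piece_def pos_def idxof_nth)
  finally have "concat (map (\<lambda>j. piece v s k j) (cl s k)) = take ((gs s - 1) * cs s) ?x"
    by (simp add: concat_take_drop)
  then show ?thesis using lx by simp
qed

lemma dec_correct:
  assumes lens: "\<forall>q<K. \<forall>n<F. length (v q n) = t"
    and accs: "\<forall>k<K. {f. f < F \<and> P f k = None} \<subseteq> A k"
    and kK: "k < K" and nF: "n < F"
    and m: "\<forall>j<K. j \<noteq> k \<longrightarrow> m j = enc j (mask K F 1 (A j) v)"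
  shows "dec k m (mask K F 1 (A k) v) (w k) n = v (w k) n"
proof (cases "P n k")
  case None
  then have "n \<in> A k" using accs kK nF by auto
  then show ?thesis using None wK kK nF unfolding dec_def mask_def by simp
next
  case (Some s)
  have sS: "s < S" using mra nF kK Some unfolding is_MRA_def by blast
  have k: "k \<in> Cs s" using kK nF Some unfolding Cs_def by auto
  have rk: "row s k = n" by (rule row_eq[OF nF kK Some])
  have meq: "map (\<lambda>j. Dk m (mask K F 1 (A k) v) s k j) (cl s k) = map (\<lambda>j. piece v s k j) (cl s k)"
  proof (rule map_cong[OF refl])
    fix j assume "j \<in> set (cl s k)"
    then have j: "j \<in> Cs s - {k}" using cl_props[OF k] by auto
    then have "j < K" "j \<noteq> k" using Cs_K by auto
    then have mj: "m j = enc j (mask K F 1 (A j) v)" using m by auto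
    show "Dk m (mask K F 1 (A k) v) s k j = piece v s k j"
      by (rule Dk_correct[where v=v and A=A and m=m, OF lens accs sS k j mj])
  qed
  have "dec k m (mask K F 1 (A k) v) (w k) n = concat (map (\<lambda>j. Dk m (mask K F 1 (A k) v) s k j) (cl s k))"
    unfolding dec_def using Some nF by simp
  also have "\<dots> = concat (map (\<lambda>j. piece v s k j) (cl s k))" by (simp only: meq)
  also have "\<dots> = v (w k) n" using reconstruct[OF lens sS k] rk by simp
  finally show ?thesis .
qed

lemma total_len: "(\<Sum>j<K. off j S) = (\<Sum>s<S. gs s * cs s)"
proof -
  have "(\<Sum>j<K. off j S) = (\<Sum>s<S. \<Sum>j<K. if j \<in> Cs s then cs s else 0)"
    unfolding off_def by (rule sum.swap)
  also have "\<dots> = (\<Sum>s<S. gs s * cs s)"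
  proof (rule sum.cong[OF refl])
    fix s
    have "(\<Sum>j<K. if j \<in> Cs s then cs s else 0) = (\<Sum>j\<in>{..<K} \<inter> Cs s. cs s)"
      by (simp add: sum.inter_filter[symmetric] Int_def conj_commute)
    also have "{..<K} \<inter> Cs s = Cs s" using Cs_K by auto
    finally show "(\<Sum>j<K. if j \<in> Cs s then cs s else 0) = gs s * cs s" using card_Cs by simp
  qed
  finally show ?thesis .
qed


lemma load_eq:
  assumes tp: "t > 0" and Kp: "K > 0" and Fp: "F > 0"
  shows "real (\<Sum>j<K. off j S) / (real K * real F * real t) =
    real S / (real K * real F)
     + (\<Sum>g = 2..K. real (S_count K F S P g) / (real K * real F * (real g - 1)))"
proof -
  let ?D = "real K * real F"
  have D0: "?D > 0" using Kp Fp by simp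
  have trm: "real (gs s * cs s) / (?D * real t) = 1 / ?D + 1 / (?D * (real (gs s) - 1))"
    if s: "s < S" for s
  proof -
    have g2: "2 \<le> gs s" using gs_bounds[OF s] by simp
    have "real (gs s - 1) * real (cs s) = real t" using cs_mult[OF s] by (metis of_nat_mult)
    then have ct: "(real (gs s) - 1) * real (cs s) = real t" using g2 by (simp add: of_nat_diff)
    have gp: "real (gs s) - 1 > 0" using g2 by simp
    have cs_eq: "real (cs s) = real t / (real (gs s) - 1)" using ct gp by (simp add: field_simps)
    define G where "G = real (gs s)"
    have Gp: "G - 1 > 0" using gp G_def by simp
    have "real (gs s * cs s) / (?D * real t) = G * (real t / (G - 1)) / (?D * real t)"
      unfolding G_def of_nat_mult cs_eq by simp
    also have "\<dots> = 1 / ?D + 1 / (?D * (G - 1))"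
      using Gp D0 tp by (intro aux_field) auto
    finally show ?thesis unfolding G_def .
  qed
  have "real (\<Sum>j<K. off j S) / (?D * real t) = (\<Sum>s<S. real (gs s * cs s) / (?D * real t))"
    unfolding total_len by (simp add: sum_divide_distrib)
  also have "\<dots> = (\<Sum>s<S. 1 / ?D + 1 / (?D * (real (gs s) - 1)))"
    by (rule sum.cong[OF refl]) (rule trm, simp)
  also have "\<dots> = real S / ?D + (\<Sum>s<S. 1 / (?D * (real (gs s) - 1)))"
    by (simp add: sum.distrib)
  also have "(\<Sum>s<S. 1 / (?D * (real (gs s) - 1))) =
     (\<Sum>g = 2..K. real (S_count K F S P g) / (?D * (real g - 1)))"
  proof -
    have "(\<Sum>g = 2..K. real (S_count K F S P g) / (?D * (real g - 1)))
        = (\<Sum>g = 2..K. \<Sum>s\<in>{x. x \<in> {..<S} \<and> gs x = g}. 1 / (?D * (real (gs s) - 1)))"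
    proof (rule sum.cong[OF refl])
      fix g
      have "S_count K F S P g = card {x. x \<in> {..<S} \<and> gs x = g}"
        unfolding S_count_def gs_def by simp
      then show "real (S_count K F S P g) / (?D * (real g - 1))
         = (\<Sum>s\<in>{x. x \<in> {..<S} \<and> gs x = g}. 1 / (?D * (real (gs s) - 1)))"
        by simp
    qed
    also have "\<dots> = (\<Sum>s<S. 1 / (?D * (real (gs s) - 1)))"
      by (rule sum.group) (auto dest: gs_bounds)
    finally show ?thesis by simp
  qed
  finally show ?thesis .
qed

end

theorem theorem1:
  fixes K F S Lam :: nat
    and P :: "nat \<Rightarrow> nat \<Rightarrow> nat option"
    and M Conn :: "nat \<Rightarrow> nat set"
    and r :: real
  assumes "is_MRA K F S P"
    and "madc_model K F Lam M Conn"
    and "r = comp_load F Lam M"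
    and "\<forall>k<K. {f. f < F \<and> P f k = None} \<subseteq> access M Conn k"
  shows "madc_achievable K F Lam M Conn
           (real S / (real K * real F)
            + (\<Sum>g = 2..K. real (S_count K F S P g) / (real K * real F * (real g - 1))))"
proof -
  note mra = assms(1) and accs = assms(4)
  have Kp: "K > 0" and Fp: "F > 0" using mra unfolding is_MRA_def by auto
  let ?t = "fact K :: nat"
  have tp: "?t > 0" by simp
  show ?thesis
    unfolding madc_achievable_def Let_def
  proof (rule exI[of _ 1], rule exI[of _ 1], rule exI[of _ "fact K"], intro conjI allI impI)
    fix W :: "nat \<Rightarrow> nat set"
    assume Wh: "(\<forall>k<K. W k \<subseteq> {..<K * 1} \<and> card (W k) = 1) \<and>
       (\<forall>k1<K. \<forall>k2<K. k1 \<noteq> k2 \<longrightarrow> W k1 \<inter> W k2 = {})"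
    define w where "w k = the_elem (W k)" for k
    have Ww: "\<And>k. k < K \<Longrightarrow> W k = {w k}"
      using Wh unfolding w_def by (metis card_1_singletonE the_elem_eq)
    have wK: "\<forall>k<K. w k < K" using Wh Ww by auto
    interpret c0: constr K F S P w by unfold_locales (use mra wK in auto)
    have tdvd: "\<forall>s<S. (card (occ K F P s) - 1) dvd ?t"
    proof (intro allI impI)
      fix s assume "s < S"
      then have "2 \<le> c0.gs s" "c0.gs s \<le> K" using c0.gs_bounds by auto
      then show "(card (occ K F P s) - 1) dvd ?t" unfolding c0.gs_def by (intro dvd_fact) auto
    qed
    interpret c: constr1 K F S P w ?t by unfold_locales (rule tdvd)
    show "\<exists>l (enc :: nat \<Rightarrow> (nat \<Rightarrow> nat \<Rightarrow> bool list) \<Rightarrow> bool list) dec.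
       (\<forall>v :: nat \<Rightarrow> nat \<Rightarrow> bool list. (\<forall>q<K * 1. \<forall>n<F * 1. length (v q n) = ?t) \<longrightarrow>
            (\<forall>k<K. length (enc k (mask (K * 1) (F * 1) 1 (access M Conn k) v)) = l k) \<and>
            (\<forall>k<K. \<forall>q\<in>W k. \<forall>n<F * 1.
                dec k (\<lambda>j. if j < K \<and> j \<noteq> k then enc j (mask (K * 1) (F * 1) 1 (access M Conn j) v) else [])
                 (mask (K * 1) (F * 1) 1 (access M Conn k) v) q n = v q n)) \<and>
       real S / (real K * real F) +
       (\<Sum>g = 2..K. real (S_count K F S P g) / (real K * real F * (real g - 1))) =
       real (sum l {..<K}) / (real (K * 1) * real (F * 1) * real ?t)"
    proof (rule exI[of _ "\<lambda>j. c.off j S"], rule exI[of _ c.enc], rule exI[of _ c.dec], intro conjI allI impI ballI)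
      fix v :: "nat \<Rightarrow> nat \<Rightarrow> bool list"
      fix k assume "\<forall>q<K * 1. \<forall>n<F * 1. length (v q n) = ?t" "k < K"
      show "length (c.enc k (mask (K * 1) (F * 1) 1 (access M Conn k) v)) = c.off k S"
        by (rule c.enc_len)
    next
      fix v :: "nat \<Rightarrow> nat \<Rightarrow> bool list" and k q n
      assume lens: "\<forall>q<K * 1. \<forall>n<F * 1. length (v q n) = ?t" and kK: "k < K"
        and q: "q \<in> W k" and n: "n < F * 1"
      have lens': "\<forall>q<K. \<forall>n<F. length (v q n) = ?t" using lens by simp
      have qw: "q = w k" using q Ww[OF kK] by simp
      have "c.dec k (\<lambda>j. if j < K \<and> j \<noteq> k then c.enc j (mask K F 1 (access M Conn j) v) else [])
              (mask K F 1 (access M Conn k) v) (w k) n = v (w k) n"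
        by (rule c.dec_correct[OF lens' accs kK]) (use n in auto)
      then show "c.dec k (\<lambda>j. if j < K \<and> j \<noteq> k then c.enc j (mask (K * 1) (F * 1) 1 (access M Conn j) v) else [])
              (mask (K * 1) (F * 1) 1 (access M Conn k) v) q n = v q n"
        using qw by (simp only: mult_1_right)
    next
      show "real S / (real K * real F) +
       (\<Sum>g = 2..K. real (S_count K F S P g) / (real K * real F * (real g - 1))) =
       real (\<Sum>j<K. c.off j S) / (real (K * 1) * real (F * 1) * real ?t)"
        using c.load_eq[OF tp Kp Fp] by simp
    qed
  qed simp_all
qed

end
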